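(* Let $X$ be a topological space and $g,h:X\to\overline{\mathbb R}$. Then the following are equivalent: (i) $(g,h)$ is a stable pair of Hahn; (ii) $(g,h)$ is a countable pair of Hahn and $g$ and $h$ are functions of the first stable Baire class. Moreover, if $X$ is normal, then (i) and (ii) are also equivalent to each of: (iii) $(g,h)$ is a pair of Hahn and $g$ and $h$ are functions of the first stable Baire class; (iv) $(g,h)$ is a pair of Hahn and $g$ and $h$ are $\sigma$-continuous.
   Context: $\overline{\mathbb R}=[-\infty,+\infty]$ with the order topology. A pair $(g,h)$ is a pair of Hahn if $g\le h$, $g$ is upper semicontinuous and $h$ is lower semicontinuous. It is a countable pair of Hahn if there are continuous $g_n,h_n:X\to\overline{\mathbb R}$ with $g(x)=\inf_n g_n(x)\le\sup_n h_n(x)=h(x)$ for all $x$. It is a stable pair of Hahn if there are continuous $u_n:X\to\overline{\mathbb R}$ with $g(x)=\min_{n\in\mathbb N}u_n(x)$ and $h(x)=\max_{n\in\mathbb N}u_n(x)$ for all $x\in X$ (attained). A sequence $f_n:X\to Z$ converges stably to $f$ if for every $x\in X$ there is $n$ with $f_k(x)=f(x)$ for all $k\ge n$; $f$ is of the first stable Baire class if it is the stable limit of a sequence of continuous functions $X\to\overline{\mathbb R}$. A function $f:X\to\overline{\mathbb R}$ is $\sigma$-continuous if there is a sequence of closed sets $X_n\subseteq X$ with $X=\bigcup_n X_n$ and $f|_{X_n}$ continuous for each $n$. *)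

theory Defs
  imports "HOL-Analysis.Analysis" "HOL-Library.Extended_Real"
begin

text \<open>Extended reals carry the order topology (the library's topology on ereal).
All notions are relative to a general topological space X and only concern
points of topspace X.\<close>

definition usc_map :: "'a topology \<Rightarrow> ('a \<Rightarrow> ereal) \<Rightarrow> bool" where
  "usc_map X f \<longleftrightarrow> (\<forall>t. openin X {x \<in> topspace X. f x < t})"

definition lsc_map :: "'a topology \<Rightarrow> ('a \<Rightarrow> ereal) \<Rightarrow> bool" where
  "lsc_map X f \<longleftrightarrow> (\<forall>t. openin X {x \<in> topspace X. t < f x})"

definition hahn_pair :: "'a topology \<Rightarrow> ('a \<Rightarrow> ereal) \<Rightarrow> ('a \<Rightarrow> ereal) \<Rightarrow> bool" where
  "hahn_pair X g h \<longleftrightarrow> (\<forall>x\<in>topspace X. g x \<le> h x) \<and> usc_map X g \<and> lsc_map X h"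

definition countable_hahn_pair :: "'a topology \<Rightarrow> ('a \<Rightarrow> ereal) \<Rightarrow> ('a \<Rightarrow> ereal) \<Rightarrow> bool" where
  "countable_hahn_pair X g h \<longleftrightarrow>
     (\<exists>(gs::nat \<Rightarrow> _) (hs::nat \<Rightarrow> _).
        (\<forall>n. continuous_map X euclidean (gs n)) \<and> (\<forall>n. continuous_map X euclidean (hs n)) \<and>
        (\<forall>x\<in>topspace X. g x = (INF n. gs n x) \<and> h x = (SUP n. hs n x) \<and> g x \<le> h x))"

definition stable_hahn_pair :: "'a topology \<Rightarrow> ('a \<Rightarrow> ereal) \<Rightarrow> ('a \<Rightarrow> ereal) \<Rightarrow> bool" where
  "stable_hahn_pair X g h \<longleftrightarrow>
     (\<exists>u::nat \<Rightarrow> _.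
        (\<forall>n. continuous_map X euclidean (u n)) \<and>
        (\<forall>x\<in>topspace X. (\<exists>n. g x = u n x) \<and> (\<forall>n. g x \<le> u n x) \<and>
                           (\<exists>n. h x = u n x) \<and> (\<forall>n. u n x \<le> h x)))"

definition stably_converges :: "'a topology \<Rightarrow> (nat \<Rightarrow> 'a \<Rightarrow> 'b) \<Rightarrow> ('a \<Rightarrow> 'b) \<Rightarrow> bool" where
  "stably_converges X fs f \<longleftrightarrow> (\<forall>x\<in>topspace X. \<exists>n. \<forall>k\<ge>n. fs k x = f x)"

definition first_stable_baire :: "'a topology \<Rightarrow> ('a \<Rightarrow> ereal) \<Rightarrow> bool" where
  "first_stable_baire X f \<longleftrightarrow>
     (\<exists>fs::nat \<Rightarrow> _. (\<forall>n. continuous_map X euclidean (fs n)) \<and> stably_converges X fs f)"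

definition sigma_continuous :: "'a topology \<Rightarrow> ('a \<Rightarrow> ereal) \<Rightarrow> bool" where
  "sigma_continuous X f \<longleftrightarrow>
     (\<exists>C::nat \<Rightarrow> _. (\<forall>n. closedin X (C n)) \<and> (\<Union>n. C n) = topspace X \<and>
        (\<forall>n. continuous_map (subtopology X (C n)) euclidean f))"

end

theory Submission
  imports Defs
begin


definition ea :: "ereal \<Rightarrow> real" where
  "ea x = (case x of ereal r \<Rightarrow> r / (1 + \<bar>r\<bar>) | PInfty \<Rightarrow> 1 | MInfty \<Rightarrow> -1)"

definition eb :: "real \<Rightarrow> ereal" where
  "eb s = (if 1 \<le> s then \<infinity> else if s \<le> -1 then -\<infinity> else ereal (s / (1 - \<bar>s\<bar>)))"

lemma ea_bounds: "-1 \<le> ea x" "ea x \<le> 1"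
  by (cases x; auto simp: ea_def divide_simps)+

lemma ea_real_bounds: "-1 < ea (ereal r)" "ea (ereal r) < 1"
  by (auto simp: ea_def divide_simps)

lemma frac_strict:
  fixes r s :: real assumes "r < s" shows "r / (1 + \<bar>r\<bar>) < s / (1 + \<bar>s\<bar>)"
proof -
  have "r * (1 + \<bar>s\<bar>) < s * (1 + \<bar>r\<bar>)"
  proof (cases "0 \<le> r")
    case True
    then show ?thesis using assms by (simp add: algebra_simps)
  next
    case False
    show ?thesis
    proof (cases "0 \<le> s")
      case True
      have "r * \<bar>s\<bar> \<le> 0" using False True by (simp add: mult_nonpos_nonneg)
      moreover have "0 \<le> s * \<bar>r\<bar>" using True by simp
      ultimately show ?thesis using False True by (simp add: algebra_simps)
    next
      case F2: False
      then show ?thesis using False assms by (simp add: algebra_simps)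
    qed
  qed
  then show ?thesis by (simp add: divide_simps add_pos_nonneg)
qed

lemma ea_strict: "x < y \<Longrightarrow> ea x < ea y"
proof (cases x; cases y)
  fix r s assume "x < y" "x = ereal r" "y = ereal s"
  then have "r < s" by auto
  then show "ea x < ea y" using \<open>x = ereal r\<close> \<open>y = ereal s\<close>
    by (simp add: ea_def frac_strict)
qed (use ea_real_bounds in \<open>auto simp: ea_def\<close>)

lemma ea_less_iff [simp]: "ea x < ea y \<longleftrightarrow> x < y"
  by (metis ea_strict less_asym' linorder_neqE)

lemma ea_le_iff [simp]: "ea x \<le> ea y \<longleftrightarrow> x \<le> y"
  by (meson ea_less_iff not_le)

lemma eb_ea [simp]: "eb (ea x) = x"
proof (cases x)
  case (real r)
  have "ea x = r / (1 + \<bar>r\<bar>)" using real by (simp add: ea_def)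
  moreover have "\<not> 1 \<le> r / (1 + \<bar>r\<bar>)" "\<not> r / (1 + \<bar>r\<bar>) \<le> -1"
    using ea_real_bounds[of r] by (auto simp: ea_def)
  moreover have "(r / (1 + \<bar>r\<bar>)) / (1 - \<bar>r / (1 + \<bar>r\<bar>)\<bar>) = r"
  proof -
    have p: "1 + \<bar>r\<bar> > 0" by simp
    have "\<bar>r / (1 + \<bar>r\<bar>)\<bar> = \<bar>r\<bar> / (1 + \<bar>r\<bar>)" by simp
    then have "1 - \<bar>r / (1 + \<bar>r\<bar>)\<bar> = 1 / (1 + \<bar>r\<bar>)" using p by (simp add: divide_simps)
    then show ?thesis using p by simp
  qed
  ultimately show ?thesis using real by (simp only: eb_def if_False)
qed (auto simp: ea_def eb_def)

lemma ea_eb: assumes "-1 \<le> s" "s \<le> 1" shows "ea (eb s) = s"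
proof -
  consider "s = 1" | "s = -1" | "\<bar>s\<bar> < 1" using assms by linarith
  then show ?thesis
  proof cases
    case 3
    then have "eb s = ereal (s / (1 - \<bar>s\<bar>))" by (auto simp: eb_def)
    moreover have "(s / (1 - \<bar>s\<bar>)) / (1 + \<bar>s / (1 - \<bar>s\<bar>)\<bar>) = s"
    proof -
      have p: "1 - \<bar>s\<bar> > 0" using 3 by simp
      have "\<bar>s / (1 - \<bar>s\<bar>)\<bar> = \<bar>s\<bar> / (1 - \<bar>s\<bar>)" using p by simp
      then have "1 + \<bar>s / (1 - \<bar>s\<bar>)\<bar> = 1 / (1 - \<bar>s\<bar>)" using p by (simp add: divide_simps)
      then show ?thesis using p by simp
    qed
    ultimately show ?thesis by (simp add: ea_def)
  qed (auto simp: ea_def eb_def)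
qed

lemma eb_mono: "s \<le> t \<Longrightarrow> eb s \<le> eb t"
proof -
  assume "s \<le> t"
  define s' where "s' = max (-1) (min 1 s)"
  define t' where "t' = max (-1) (min 1 t)"
  have "eb s = eb s'" "eb t = eb t'" by (auto simp: eb_def s'_def t'_def)
  moreover have "ea (eb s') \<le> ea (eb t')"
    using \<open>s \<le> t\<close> by (simp add: ea_eb s'_def t'_def)
  ultimately show ?thesis by simp
qed

lemma ea_lt_iff: "t \<le> 1 \<Longrightarrow> (ea y < t \<longleftrightarrow> y < eb t)"
proof (cases "t < -1")
  case True then show ?thesis using ea_bounds[of y] by (auto simp: eb_def)
next
  case False
  assume "t \<le> 1"
  then have "t = ea (eb t)" using False by (simp add: ea_eb)
  then show ?thesis by (metis ea_less_iff)
qed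

lemma ea_gt_iff: "-1 \<le> t \<Longrightarrow> (t < ea y \<longleftrightarrow> eb t < y)"
proof (cases "t > 1")
  case True then show ?thesis using ea_bounds[of y] by (auto simp: eb_def)
next
  case False
  assume "-1 \<le> t"
  then have "t = ea (eb t)" using False by (simp add: ea_eb)
  then show ?thesis by (metis ea_less_iff)
qed




lemma um_lt1: "- (a::ereal) < t \<longleftrightarrow> -t < a"
  by (metis ereal_uminus_less_reorder)
lemma um_lt2: "(t::ereal) < - a \<longleftrightarrow> a < -t"
  by (metis ereal_uminus_less_reorder ereal_uminus_uminus)


lemma cont_ereal_iff:
  fixes f :: "'a \<Rightarrow> ereal"
  shows "continuous_map X euclidean f \<longleftrightarrow> usc_map X f \<and> lsc_map X f"
  by (simp add: continuous_map_upper_lower_semicontinuous_lt usc_map_def lsc_map_def conj_commute)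

lemma cont_ea:
  fixes f :: "'a \<Rightarrow> ereal"
  assumes "continuous_map X euclidean f"
  shows "continuous_map X euclideanreal (\<lambda>x. ea (f x))"
proof -
  have u: "\<And>t. openin X {x \<in> topspace X. f x < t}" and l: "\<And>t. openin X {x \<in> topspace X. t < f x}"
    using assms by (auto simp: cont_ereal_iff usc_map_def lsc_map_def)
  have "openin X {x \<in> topspace X. ea (f x) < t}" for t
  proof (cases "t \<le> 1")
    case True
    then show ?thesis using u[of "eb t"] by (simp add: ea_lt_iff)
  next
    case False
    then have "\<And>x. ea (f x) < t" using ea_bounds(2) by (meson le_less_trans not_le)
    then have "{x \<in> topspace X. ea (f x) < t} = topspace X" by auto
    then show ?thesis by simp
  qed
  moreover have "openin X {x \<in> topspace X. t < ea (f x)}" for t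
  proof (cases "-1 \<le> t")
    case True
    then show ?thesis using l[of "eb t"] by (simp add: ea_gt_iff)
  next
    case False
    then have "\<And>x. t < ea (f x)" using ea_bounds(1) by (meson less_le_trans not_le)
    then have "{x \<in> topspace X. t < ea (f x)} = topspace X" by auto
    then show ?thesis by simp
  qed
  ultimately show ?thesis
    by (simp add: continuous_map_upper_lower_semicontinuous_lt)
qed

lemma cont_eb:
  assumes "continuous_map X euclideanreal F" "\<And>x. x \<in> topspace X \<Longrightarrow> -1 \<le> F x \<and> F x \<le> 1"
  shows "continuous_map X euclidean (\<lambda>x. eb (F x))"
proof -
  have u: "\<And>t. openin X {x \<in> topspace X. F x < t}" and l: "\<And>t. openin X {x \<in> topspace X. t < F x}"
    using assms by (auto simp: continuous_map_upper_lower_semicontinuous_lt)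
  have "{x \<in> topspace X. eb (F x) < t} = {x \<in> topspace X. F x < ea t}" for t
  proof -
    have "eb (F x) < t \<longleftrightarrow> F x < ea t" if "x \<in> topspace X" for x
      using assms(2)[OF that] by (metis ea_eb ea_less_iff)
    then show ?thesis by auto
  qed
  moreover have "{x \<in> topspace X. t < eb (F x)} = {x \<in> topspace X. ea t < F x}" for t
  proof -
    have "t < eb (F x) \<longleftrightarrow> ea t < F x" if "x \<in> topspace X" for x
      using assms(2)[OF that] by (metis ea_eb ea_less_iff)
    then show ?thesis by auto
  qed
  ultimately show ?thesis using u l
    by (simp add: continuous_map_upper_lower_semicontinuous_lt)
qed

lemma cont_min_ereal:
  fixes f g :: "'a \<Rightarrow> ereal"
  assumes "continuous_map X euclidean f" "continuous_map X euclidean g"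
  shows "continuous_map X euclidean (\<lambda>x. min (f x) (g x))"
proof -
  have "{x \<in> topspace X. min (f x) (g x) < t} = {x \<in> topspace X. f x < t} \<union> {x \<in> topspace X. g x < t}"
       "{x \<in> topspace X. t < min (f x) (g x)} = {x \<in> topspace X. t < f x} \<inter> {x \<in> topspace X. t < g x}" for t
    by (auto simp: min_less_iff_disj)
  then show ?thesis using assms
    by (simp add: continuous_map_upper_lower_semicontinuous_lt openin_Un openin_Int)
qed

lemma cont_max_ereal:
  fixes f g :: "'a \<Rightarrow> ereal"
  assumes "continuous_map X euclidean f" "continuous_map X euclidean g"
  shows "continuous_map X euclidean (\<lambda>x. max (f x) (g x))"
proof -
  have "{x \<in> topspace X. max (f x) (g x) < t} = {x \<in> topspace X. f x < t} \<inter> {x \<in> topspace X. g x < t}"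
       "{x \<in> topspace X. t < max (f x) (g x)} = {x \<in> topspace X. t < f x} \<union> {x \<in> topspace X. t < g x}" for t
    by (auto simp: less_max_iff_disj)
  then show ?thesis using assms
    by (simp add: continuous_map_upper_lower_semicontinuous_lt openin_Un openin_Int)
qed

lemma cont_uminus_ereal:
  fixes f :: "'a \<Rightarrow> ereal"
  assumes "continuous_map X euclidean f"
  shows "continuous_map X euclidean (\<lambda>x. - f x)"
proof -
  have u: "\<And>t. openin X {x \<in> topspace X. f x < t}" and l: "\<And>t. openin X {x \<in> topspace X. t < f x}"
    using assms by (auto simp: continuous_map_upper_lower_semicontinuous_lt)
  have e1: "{x \<in> topspace X. - f x < t} = {x \<in> topspace X. -t < f x}"
   and e2: "{x \<in> topspace X. t < - f x} = {x \<in> topspace X. f x < -t}" for t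
    by (simp_all only: um_lt1 um_lt2)
  show ?thesis unfolding continuous_map_upper_lower_semicontinuous_lt e1 e2 using u l by blast
qed

lemma usc_uminus: "usc_map X (\<lambda>x. - f x) \<longleftrightarrow> lsc_map X f"
proof -
  have e: "{x \<in> topspace X. - f x < t} = {x \<in> topspace X. -t < f x}" for t
    by (simp only: um_lt1)
  show ?thesis unfolding usc_map_def lsc_map_def e
    by (metis ereal_uminus_uminus)
qed

lemma lsc_uminus: "lsc_map X (\<lambda>x. - f x) \<longleftrightarrow> usc_map X f"
proof -
  have e: "{x \<in> topspace X. t < - f x} = {x \<in> topspace X. f x < -t}" for t
    by (simp only: um_lt2)
  show ?thesis unfolding usc_map_def lsc_map_def e
    by (metis ereal_uminus_uminus)
qed




lemma approx_insert:
  fixes g h :: "'a \<Rightarrow> real"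
  assumes X: "normal_space X"
    and gu: "\<And>t. openin X {x \<in> topspace X. g x < t}"
    and hl: "\<And>t. openin X {x \<in> topspace X. t < h x}"
    and gh: "\<And>x. x \<in> topspace X \<Longrightarrow> g x \<le> h x"
    and lo: "\<And>x. x \<in> topspace X \<Longrightarrow> lo \<le> g x" and hi: "\<And>x. x \<in> topspace X \<Longrightarrow> h x \<le> hi"
    and d: "\<delta> > 0"
  obtains f where "continuous_map X euclideanreal f"
    "\<And>x. x \<in> topspace X \<Longrightarrow> g x - \<delta> \<le> f x \<and> f x \<le> h x + \<delta>"
proof -
  define N where "N = nat \<lceil>(hi - lo) / \<delta>\<rceil>"
  define A where "A i = {x \<in> topspace X. lo + real i * \<delta> \<le> g x}" for i :: nat
  define B where "B i = {x \<in> topspace X. h x \<le> lo + (real i - 1) * \<delta>}" for i :: nat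
  have cA: "closedin X (A i)" for i
  proof -
    have "topspace X - A i = {x \<in> topspace X. g x < lo + real i * \<delta>}"
      by (auto simp: A_def)
    then show ?thesis using gu unfolding closedin_def A_def by auto
  qed
  have cB: "closedin X (B i)" for i
  proof -
    have "topspace X - B i = {x \<in> topspace X. lo + (real i - 1) * \<delta> < h x}"
      by (auto simp: B_def)
    then show ?thesis using hl unfolding closedin_def B_def by auto
  qed
  have dj: "disjnt (B i) (A i)" for i
  proof -
    have "False" if "x \<in> A i" "x \<in> B i" for x
    proof -
      have "lo + real i * \<delta> \<le> g x" "h x \<le> lo + (real i - 1) * \<delta>" "x \<in> topspace X"
        using that by (auto simp: A_def B_def)
      moreover have "g x \<le> h x" using gh \<open>x \<in> topspace X\<close> by auto
      ultimately show False using d by (simp add: algebra_simps)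
    qed
    then show ?thesis by (auto simp: disjnt_def)
  qed
  have "\<forall>i. \<exists>D. continuous_map X (top_of_set {0..\<delta>}) D \<and> D ` B i \<subseteq> {0} \<and> D ` A i \<subseteq> {\<delta>}"
  proof
    fix i
    obtain D where "continuous_map X (top_of_set {0..\<delta>}) D" "D ` B i \<subseteq> {0}" "D ` A i \<subseteq> {\<delta>}"
      using Urysohn_lemma[OF X cB[of i] cA[of i] dj[of i]] d by (metis less_eq_real_def)
    then show "\<exists>D. continuous_map X (top_of_set {0..\<delta>}) D \<and> D ` B i \<subseteq> {0} \<and> D ` A i \<subseteq> {\<delta>}"
      by blast
  qed
  then obtain D where D: "\<And>i. continuous_map X (top_of_set {0..\<delta>}) (D i)"
      "\<And>i. D i ` B i \<subseteq> {0}" "\<And>i. D i ` A i \<subseteq> {\<delta>}"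
    by metis
  have Dc: "continuous_map X euclideanreal (D i)" for i
    using D(1) continuous_map_in_subtopology by blast
  have Db: "0 \<le> D i x \<and> D i x \<le> \<delta>" if "x \<in> topspace X" for i x
    using D(1)[of i] that by (auto simp: continuous_map_def)
  have DA: "D i x = \<delta>" if "x \<in> A i" for i x using D(3)[of i] that by auto
  have DB: "D i x = 0" if "x \<in> B i" for i x using D(2)[of i] that by auto
  define f where "f x = lo + (\<Sum>i\<in>{1..N}. D i x)" for x
  show thesis
  proof
    show "continuous_map X euclideanreal f"
      unfolding f_def by (intro continuous_map_add continuous_map_sum continuous_map_const[THEN iffD2] Dc) auto
  next
    fix x assume x: "x \<in> topspace X"
    define j where "j = nat \<lfloor>(g x - lo) / \<delta>\<rfloor>"
    have gl: "0 \<le> (g x - lo) / \<delta>" using lo[OF x] d by simp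
    have j1: "real j \<le> (g x - lo) / \<delta>" using gl by (simp add: j_def)
    have j2: "(g x - lo) / \<delta> < real j + 1" using gl by (simp add: j_def; linarith)
    have "(g x - lo) / \<delta> \<le> (hi - lo) / \<delta>"
      using gh[OF x] hi[OF x] d by (simp add: divide_right_mono)
    then have jN: "j \<le> N" unfolding j_def N_def
      by (metis ceiling_mono floor_le_ceiling le_nat_iff nat_int nat_mono order_trans)
    have "real j * \<delta> \<le> g x - lo" using j1 d by (simp add: pos_le_divide_eq)
    have "g x - lo < (real j + 1) * \<delta>" using j2 d by (simp add: pos_divide_less_eq)
    have sA: "(\<Sum>i\<in>{1..j}. D i x) = real j * \<delta>"
    proof -
      have "D i x = \<delta>" if "i \<in> {1..j}" for i
      proof (rule DA)
        have "real i * \<delta> \<le> real j * \<delta>" using that d by (simp add: mult_right_mono)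
        then show "x \<in> A i" using x \<open>real j * \<delta> \<le> g x - lo\<close> by (simp add: A_def)
      qed
      then show ?thesis by simp
    qed
    have "(\<Sum>i\<in>{1..j}. D i x) \<le> (\<Sum>i\<in>{1..N}. D i x)"
      by (rule sum_mono2) (use jN Db x in auto)
    then have low: "g x - \<delta> \<le> f x"
      using sA \<open>g x - lo < (real j + 1) * \<delta>\<close> by (simp add: f_def algebra_simps)
    define l where "l = nat \<lceil>(h x - lo) / \<delta>\<rceil>"
    have hl0: "0 \<le> (h x - lo) / \<delta>" using lo[OF x] gh[OF x] d by simp
    have l1: "(h x - lo) / \<delta> \<le> real l" using hl0 by (simp add: l_def; linarith)
    have l2: "real l < (h x - lo) / \<delta> + 1" using hl0 by (simp add: l_def; linarith)
    have "h x - lo \<le> real l * \<delta>" using l1 d by (simp add: pos_divide_le_eq)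
    have "real l * \<delta> < ((h x - lo) / \<delta> + 1) * \<delta>" using l2 d by (rule mult_strict_right_mono)
    also have "\<dots> = h x - lo + \<delta>" using d by (simp add: field_simps)
    finally have "real l * \<delta> < h x - lo + \<delta>" .
    have "(\<Sum>i\<in>{1..N}. D i x) = (\<Sum>i\<in>{1..N} \<inter> {1..l}. D i x)"
    proof (rule sum.mono_neutral_right)
      show "\<forall>i\<in>{1..N} - {1..N} \<inter> {1..l}. D i x = 0"
      proof
        fix i assume "i \<in> {1..N} - {1..N} \<inter> {1..l}"
        then have "l + 1 \<le> i" by auto
        then have "real l \<le> real i - 1" by simp
        then have "real l * \<delta> \<le> (real i - 1) * \<delta>" using d by (simp add: mult_right_mono)
        then have "x \<in> B i" using x \<open>h x - lo \<le> real l * \<delta>\<close> by (simp add: B_def)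
        then show "D i x = 0" by (rule DB)
      qed
    qed auto
    also have "\<dots> \<le> real (card ({1..N} \<inter> {1..l})) * \<delta>"
      using sum_bounded_above[of "{1..N} \<inter> {1..l}" "\<lambda>i. D i x" \<delta>] Db x by auto
    also have "\<dots> \<le> real l * \<delta>"
    proof -
      have "card ({1..N} \<inter> {1..l}) \<le> card {1..l}" by (rule card_mono) auto
      then show ?thesis using d by (simp add: mult_right_mono)
    qed
    finally have "f x \<le> h x + \<delta>"
      using \<open>real l * \<delta> < h x - lo + \<delta>\<close> by (simp add: f_def)
    with low show "g x - \<delta> \<le> f x \<and> f x \<le> h x + \<delta>" by simp
  qed
qed




lemma tong_real:
  fixes g h :: "'a \<Rightarrow> real"
  assumes X: "normal_space X"
    and gu: "\<And>t. openin X {x \<in> topspace X. g x < t}"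
    and hl: "\<And>t. openin X {x \<in> topspace X. t < h x}"
    and gh: "\<And>x. x \<in> topspace X \<Longrightarrow> g x \<le> h x"
    and lo: "\<And>x. x \<in> topspace X \<Longrightarrow> -1 \<le> g x" and hi: "\<And>x. x \<in> topspace X \<Longrightarrow> h x \<le> 1"
  obtains f where "continuous_map X euclideanreal f"
    "\<And>x. x \<in> topspace X \<Longrightarrow> g x \<le> f x \<and> f x \<le> h x"
proof -
  define good where "good f k \<longleftrightarrow> continuous_map X euclideanreal f \<and>
      (\<forall>x\<in>topspace X. g x - (1/2)^k \<le> f x \<and> f x \<le> h x + (1/2)^k)" for f and k :: nat
  have step: "\<exists>f'. good f' (Suc k) \<and> (\<forall>x\<in>topspace X. \<bar>f' x - f x\<bar> \<le> 2 * (1/2)^k)"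
    if gf: "good f k" for f k
  proof -
    define e :: real where "e = (1/2)^k"
    have e0: "0 < e" and e1: "e \<le> 1" by (auto simp: e_def power_le_one)
    have fc: "continuous_map X euclideanreal f" and fb: "\<And>x. x \<in> topspace X \<Longrightarrow> g x - e \<le> f x \<and> f x \<le> h x + e"
      using gf by (auto simp: good_def e_def)
    have fu: "openin X {x \<in> topspace X. f x < t}" and fl: "openin X {x \<in> topspace X. t < f x}" for t
      using fc by (auto simp: continuous_map_upper_lower_semicontinuous_lt)
    define g' where "g' x = max (g x - e/4) (f x - e)" for x
    define h' where "h' x = min (h x + e/4) (f x + e)" for x
    have g'u: "openin X {x \<in> topspace X. g' x < t}" for t
    proof -
      have "{x \<in> topspace X. g' x < t} = {x \<in> topspace X. g x < t + e/4} \<inter> {x \<in> topspace X. f x < t + e}"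
        by (auto simp: g'_def)
      then show ?thesis using gu fu by auto
    qed
    have h'l: "openin X {x \<in> topspace X. t < h' x}" for t
    proof -
      have "{x \<in> topspace X. t < h' x} = {x \<in> topspace X. t - e/4 < h x} \<inter> {x \<in> topspace X. t - e < f x}"
        by (auto simp: h'_def)
      then show ?thesis using hl fl by auto
    qed
    have g'h': "g' x \<le> h' x" if "x \<in> topspace X" for x
      using fb[OF that] gh[OF that] e0 by (auto simp: g'_def h'_def)
    have g'lo: "-2 \<le> g' x" if "x \<in> topspace X" for x
      using lo[OF that] e1 by (auto simp: g'_def)
    have h'hi: "h' x \<le> 2" if "x \<in> topspace X" for x
      using hi[OF that] e1 by (auto simp: h'_def)
    obtain f' where f'c: "continuous_map X euclideanreal f'"
      and f'b: "\<And>x. x \<in> topspace X \<Longrightarrow> g' x - e/4 \<le> f' x \<and> f' x \<le> h' x + e/4"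
      using approx_insert[OF X g'u h'l g'h' g'lo h'hi, of "e/4"] e0 by auto
    have "good f' (Suc k)"
      unfolding good_def
    proof (intro conjI ballI f'c)
      fix x assume x: "x \<in> topspace X"
      have "(1/2::real)^Suc k = e/2" by (simp add: e_def)
      then show "g x - (1/2)^Suc k \<le> f' x" "f' x \<le> h x + (1/2)^Suc k"
        using f'b[OF x] by (auto simp: g'_def h'_def)
    qed
    moreover have "\<bar>f' x - f x\<bar> \<le> 2 * (1/2)^k" if "x \<in> topspace X" for x
      using f'b[OF that] e0 unfolding g'_def h'_def e_def[symmetric] by auto
    ultimately show ?thesis by blast
  qed
  then obtain nxt where nxt: "\<And>f k. good f k \<Longrightarrow> good (nxt f k) (Suc k) \<and>
       (\<forall>x\<in>topspace X. \<bar>nxt f k x - f x\<bar> \<le> 2 * (1/2)^k)"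
    by metis
  define F where "F = rec_nat (\<lambda>x. 0) (\<lambda>n r. nxt r n)"
  have F0: "F 0 = (\<lambda>x. 0)" by (simp add: F_def)
  have FS: "F (Suc n) = nxt (F n) n" for n by (simp add: F_def)
  have good: "good (F n) n" for n
  proof (induction n)
    case 0
    show ?case using lo hi gh by (force simp: good_def F0)
  next
    case (Suc n) then show ?case using nxt FS by metis
  qed
  have diff: "\<bar>F (Suc n) x - F n x\<bar> \<le> 2 * (1/2)^n" if "x \<in> topspace X" for n x
    using nxt[OF good[of n]] FS that by auto
  obtain L where contL: "continuous_map X euclideanreal L"
    and L: "\<And>\<epsilon>. 0 < \<epsilon> \<Longrightarrow> \<forall>\<^sub>F n in sequentially. \<forall>x\<in>topspace X. dist (F n x) (L x) < \<epsilon>"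
  proof (rule Met_TC.continuous_map_uniformly_Cauchy_limit)
    show "\<forall>\<^sub>F n in sequentially. continuous_map X (Met_TC.mtopology) (F n)"
      using good good_def by fastforce
    show "\<exists>N. \<forall>m n x. N \<le> m \<longrightarrow> N \<le> n \<longrightarrow> x \<in> topspace X \<longrightarrow> dist (F m x) (F n x) < \<epsilon>"
      if "\<epsilon> > 0" for \<epsilon>
    proof -
      have "\<forall>\<^sub>F n in sequentially. \<bar>(1/2::real) ^ n\<bar> < \<epsilon>/4"
        by (rule Archimedean_eventually_pow_inverse) (use that in auto)
      then obtain N where N: "\<And>n. n \<ge> N \<Longrightarrow> \<bar>(1/2::real) ^ n\<bar> < \<epsilon>/4"
        by (meson eventually_sequentially order_le_less_trans)
      have "\<bar>F m x - F n x\<bar> < \<epsilon>"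
        if "N \<le> m" "N \<le> n" and x: "x \<in> topspace X" "m \<le> n" for m n x
      proof (cases "m < n")
        case True
        have 23: "(\<Sum>k = m..<n. (1/2::real)^k) = 2 * ((1/2) ^ m - (1/2) ^ n)"
          using \<open>m \<le> n\<close>
          by (induction n) (auto simp: le_Suc_eq)
        have "\<bar>F m x - F n x\<bar> \<le> \<bar>\<Sum>k = m..<n. F (Suc k) x - F k x\<bar>"
          by (subst sum_Suc_diff' [OF \<open>m \<le> n\<close>]) linarith
        also have "\<dots> \<le> (\<Sum>k = m..<n. \<bar>F (Suc k) x - F k x\<bar>)"
          by (rule sum_abs)
        also have "\<dots> \<le> (\<Sum>k = m..<n. 2 * (1/2)^k)"
          by (meson diff sum_mono x(1))
        also have "\<dots> = 2 * (\<Sum>k = m..<n. (1/2)^k)"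
          by (simp add: sum_distrib_left)
        also have "\<dots> = 4 * ((1/2) ^ m - (1/2) ^ n)"
          by (simp add: 23)
        also have "\<dots> < 4 * ((1/2) ^ m)"
          by auto
        also have "\<dots> < \<epsilon>"
          using N [OF \<open>N \<le> m\<close>] by simp
        finally show ?thesis .
      qed (use \<open>0 < \<epsilon>\<close> \<open>m \<le> n\<close> in auto)
      then show ?thesis
        by (metis dist_commute_lessI dist_real_def nle_le)
    qed
  qed auto
  show thesis
  proof
    show "continuous_map X euclideanreal L" by (rule contL)
  next
    fix x assume x: "x \<in> topspace X"
    have Fb: "g x - (1/2)^n \<le> F n x \<and> F n x \<le> h x + (1/2)^n" for n
      using good[of n] x by (auto simp: good_def)
    have ev: "\<forall>\<^sub>F n in sequentially. \<bar>F n x - L x\<bar> < e \<and> (1/2::real)^n < e" if "e > 0" for e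
    proof -
      have "\<forall>\<^sub>F n in sequentially. \<bar>(1/2::real) ^ n\<bar> < e"
        by (rule Archimedean_eventually_pow_inverse) (use that in auto)
      moreover have "\<forall>\<^sub>F n in sequentially. dist (F n x) (L x) < e"
        using L[OF that] x by (auto elim: eventually_mono)
      ultimately show ?thesis by eventually_elim (auto simp: dist_real_def)
    qed
    have "g x \<le> L x"
    proof (rule ccontr)
      assume "\<not> g x \<le> L x"
      then have e: "(g x - L x) / 2 > 0" by simp
      obtain n where n1: "\<bar>F n x - L x\<bar> < (g x - L x) / 2" and n2: "(1/2::real)^n < (g x - L x) / 2"
        using eventually_happens'[OF trivial_limit_sequentially ev[OF e]] by auto
      define p where "p = (1/2::real)^n"
      have a: "F n x - L x < (g x - L x) / 2" using n1 abs_less_iff[of "F n x - L x" "(g x - L x) / 2"] by linarith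
      have b: "g x - p \<le> F n x" using Fb[of n] by (simp add: p_def)
      have c: "p < (g x - L x) / 2" using n2 by (simp add: p_def)
      from a b c show False by (argo | (simp add: field_simps) | smt (verit))
    qed
    moreover have "L x \<le> h x"
    proof (rule ccontr)
      assume "\<not> L x \<le> h x"
      then have e: "(L x - h x) / 2 > 0" by simp
      obtain n where n1: "\<bar>F n x - L x\<bar> < (L x - h x) / 2" and n2: "(1/2::real)^n < (L x - h x) / 2"
        using eventually_happens'[OF trivial_limit_sequentially ev[OF e]] by auto
      define p where "p = (1/2::real)^n"
      have a: "L x - F n x < (L x - h x) / 2" using n1 abs_less_iff[of "F n x - L x" "(L x - h x) / 2"] by linarith
      have b: "F n x \<le> h x + p" using Fb[of n] by (simp add: p_def)
      have c: "p < (L x - h x) / 2" using n2 by (simp add: p_def)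
      from a b c show False by (argo | (simp add: field_simps) | smt (verit))
    qed
    ultimately show "g x \<le> L x \<and> L x \<le> h x" by simp
  qed
qed




lemma usc_ea: "usc_map X g \<Longrightarrow> openin X {x \<in> topspace X. ea (g x) < t}"
proof (cases "t \<le> 1")
  case True
  assume "usc_map X g"
  then show ?thesis using True by (simp add: ea_lt_iff usc_map_def)
next
  case False
  then have "\<And>x. ea (g x) < t" using ea_bounds(2) by (meson le_less_trans not_le)
  then have "{x \<in> topspace X. ea (g x) < t} = topspace X" by auto
  then show ?thesis by simp
qed

lemma lsc_ea: "lsc_map X h \<Longrightarrow> openin X {x \<in> topspace X. t < ea (h x)}"
proof (cases "-1 \<le> t")
  case True
  assume "lsc_map X h"
  then show ?thesis using True by (simp add: ea_gt_iff lsc_map_def)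
next
  case False
  then have "\<And>x. t < ea (h x)" using ea_bounds(1) by (meson less_le_trans not_le)
  then have "{x \<in> topspace X. t < ea (h x)} = topspace X" by auto
  then show ?thesis by simp
qed

lemma tong_ereal:
  fixes g h :: "'a \<Rightarrow> ereal"
  assumes X: "normal_space X" and gu: "usc_map X g" and hl: "lsc_map X h"
    and gh: "\<And>x. x \<in> topspace X \<Longrightarrow> g x \<le> h x"
  obtains c where "continuous_map X euclidean c" "\<And>x. x \<in> topspace X \<Longrightarrow> g x \<le> c x \<and> c x \<le> h x"
proof -
  obtain F where Fc: "continuous_map X euclideanreal F"
    and Fb: "\<And>x. x \<in> topspace X \<Longrightarrow> ea (g x) \<le> F x \<and> F x \<le> ea (h x)"
  proof -
    have gu': "\<And>t. openin X {x \<in> topspace X. ea (g x) < t}" using usc_ea[OF gu] .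
    have hl': "\<And>t. openin X {x \<in> topspace X. t < ea (h x)}" using lsc_ea[OF hl] .
    have gh': "\<And>x. x \<in> topspace X \<Longrightarrow> ea (g x) \<le> ea (h x)" using gh by simp
    have lo': "\<And>x. x \<in> topspace X \<Longrightarrow> -1 \<le> ea (g x)" using ea_bounds by simp
    have hi': "\<And>x. x \<in> topspace X \<Longrightarrow> ea (h x) \<le> 1" using ea_bounds by simp
    show ?thesis using tong_real[OF X gu' hl' gh' lo' hi'] that by blast
  qed
  have F1: "-1 \<le> F x \<and> F x \<le> 1" if "x \<in> topspace X" for x
    using Fb[OF that] ea_bounds[of "g x"] ea_bounds[of "h x"] by linarith
  show thesis
  proof
    show "continuous_map X euclidean (\<lambda>x. eb (F x))" by (rule cont_eb[OF Fc F1])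
  next
    fix x assume x: "x \<in> topspace X"
    have "eb (ea (g x)) \<le> eb (F x)" "eb (F x) \<le> eb (ea (h x))"
      using eb_mono[OF conjunct1[OF Fb[OF x]]] eb_mono[OF conjunct2[OF Fb[OF x]]] by blast+
    then show "g x \<le> eb (F x) \<and> eb (F x) \<le> h x" by simp
  qed
qed

lemma ext_on_closed:
  fixes g :: "'a \<Rightarrow> ereal"
  assumes X: "normal_space X" and gu: "usc_map X g" and C: "closedin X C"
    and gc: "continuous_map (subtopology X C) euclidean g"
  shows "\<exists>u. continuous_map X euclidean u \<and> (\<forall>x\<in>topspace X. g x \<le> u x) \<and> (\<forall>x\<in>C. u x = g x)"
proof -
  define h where "h x = (if x \<in> C then g x else \<infinity>)" for x
  have CX: "C \<subseteq> topspace X" using C closedin_subset by auto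
  have hl: "lsc_map X h"
    unfolding lsc_map_def
  proof
    fix t
    have "openin (subtopology X C) {x \<in> topspace (subtopology X C). t < g x}"
      using gc by (simp add: continuous_map_upper_lower_semicontinuous_lt)
    then obtain W where W: "openin X W" "{x \<in> topspace (subtopology X C). t < g x} = W \<inter> C"
      by (auto simp: openin_subtopology)
    have WX: "W \<subseteq> topspace X" using W(1) openin_subset by auto
    show "openin X {x \<in> topspace X. t < h x}"
    proof (cases "t = \<infinity>")
      case True
      then have e: "{x \<in> topspace X. t < h x} = {}" by auto
      show ?thesis unfolding e by simp
    next
      case False
      have "{x \<in> topspace X. t < h x} = (topspace X - C) \<union> W"
      proof (intro set_eqI iffI)
        fix x assume "x \<in> {x \<in> topspace X. t < h x}"
        then show "x \<in> (topspace X - C) \<union> W"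
          using W(2) by (auto simp: h_def split: if_splits)
      next
        fix x assume "x \<in> (topspace X - C) \<union> W"
        then show "x \<in> {x \<in> topspace X. t < h x}"
        proof
          assume "x \<in> topspace X - C" then show ?thesis using False by (auto simp: h_def)
        next
          assume xW: "x \<in> W"
          show ?thesis
          proof (cases "x \<in> C")
            case True
            then have "x \<in> {x \<in> topspace (subtopology X C). t < g x}" using W(2) xW by blast
            then show ?thesis using True by (auto simp: h_def)
          next
            case False
            then show ?thesis using xW WX \<open>t \<noteq> \<infinity>\<close> by (auto simp: h_def)
          qed
        qed
      qed
      moreover have "openin X (topspace X - C)" using C by (simp add: closedin_def)
      ultimately show ?thesis using W(1) by auto
    qed
  qed
  have gh: "g x \<le> h x" for x by (simp add: h_def)
  obtain u where u: "continuous_map X euclidean u" "\<And>x. x \<in> topspace X \<Longrightarrow> g x \<le> u x \<and> u x \<le> h x"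
    using tong_ereal[OF X gu hl gh] by blast
  have "u x = g x" if "x \<in> C" for x
    using u(2)[of x] that CX by (auto simp: h_def intro: order.antisym)
  then show ?thesis using u by blast
qed

definition stable_lower :: "'a topology \<Rightarrow> ('a \<Rightarrow> ereal) \<Rightarrow> bool" where
  "stable_lower X g \<longleftrightarrow> (\<exists>u::nat \<Rightarrow> 'a \<Rightarrow> ereal. (\<forall>n. continuous_map X euclidean (u n)) \<and>
     (\<forall>x\<in>topspace X. (\<exists>n. g x = u n x) \<and> (\<forall>n. g x \<le> u n x)))"

definition stable_upper :: "'a topology \<Rightarrow> ('a \<Rightarrow> ereal) \<Rightarrow> bool" where
  "stable_upper X h \<longleftrightarrow> (\<exists>u::nat \<Rightarrow> 'a \<Rightarrow> ereal. (\<forall>n. continuous_map X euclidean (u n)) \<and>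
     (\<forall>x\<in>topspace X. (\<exists>n. h x = u n x) \<and> (\<forall>n. u n x \<le> h x)))"

lemma stable_lower_from_cover:
  fixes g :: "'a \<Rightarrow> ereal"
  assumes X: "normal_space X" and gu: "usc_map X g" and sc: "sigma_continuous X g"
  shows "stable_lower X g"
proof -
  obtain C :: "nat \<Rightarrow> 'a set" where C1: "\<forall>n. closedin X (C n)" and C2: "(\<Union>n. C n) = topspace X"
    and C3: "\<forall>n. continuous_map (subtopology X (C n)) euclidean g"
    using sc unfolding sigma_continuous_def by blast
  have C: "\<And>n. closedin X (C n)" "(\<Union>n. C n) = topspace X"
    "\<And>n. continuous_map (subtopology X (C n)) euclidean g"
    using C1 C2 C3 by auto
  have "\<forall>n. \<exists>u. continuous_map X euclidean u \<and> (\<forall>x\<in>topspace X. g x \<le> u x) \<and> (\<forall>x\<in>C n. u x = g x)"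
  proof
    fix n
    show "\<exists>u. continuous_map X euclidean u \<and> (\<forall>x\<in>topspace X. g x \<le> u x) \<and> (\<forall>x\<in>C n. u x = g x)"
      by (rule ext_on_closed[OF X gu C(1)[of n] C(3)[of n]])
  qed
  from choice[OF this] obtain u where u0: "\<forall>n. continuous_map X euclidean (u n) \<and> (\<forall>x\<in>topspace X. g x \<le> u n x) \<and> (\<forall>x\<in>C n. u n x = g x)"
    ..
  then have u: "\<And>n. continuous_map X euclidean (u n)" "\<And>n x. x \<in> topspace X \<Longrightarrow> g x \<le> u n x"
    "\<And>n x. x \<in> C n \<Longrightarrow> u n x = g x"
    by blast+
  show ?thesis
    unfolding stable_lower_def
  proof (intro exI[of _ u] conjI allI ballI u(1))
    fix x assume x: "x \<in> topspace X"
    then obtain n where "x \<in> C n" using C(2) by blast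
    then have "u n x = g x" by (rule u(3))
    then show "\<exists>n. g x = u n x" by (intro exI[of _ n]) simp
    show "\<And>n. g x \<le> u n x" using u(2) x by blast
  qed
qed

lemma sigma_uminus:
  assumes "sigma_continuous X f" shows "sigma_continuous X (\<lambda>x. - f x)"
proof -
  obtain C :: "nat \<Rightarrow> 'a set" where C1: "\<forall>n. closedin X (C n)" and C2: "(\<Union>n. C n) = topspace X"
    and C3: "\<forall>n. continuous_map (subtopology X (C n)) euclidean f"
    using assms unfolding sigma_continuous_def by blast
  have "\<forall>n. continuous_map (subtopology X (C n)) euclidean (\<lambda>x. - f x)"
    using C3 cont_uminus_ereal by blast
  then show ?thesis unfolding sigma_continuous_def using C1 C2 by blast
qed

lemma stable_upper_from_cover:
  fixes h :: "'a \<Rightarrow> ereal"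
  assumes X: "normal_space X" and hl: "lsc_map X h" and sc: "sigma_continuous X h"
  shows "stable_upper X h"
proof -
  have hu: "usc_map X (\<lambda>x. - h x)" using hl by (simp add: usc_uminus)
  have "stable_lower X (\<lambda>x. - h x)"
    by (rule stable_lower_from_cover[OF X hu sigma_uminus[OF sc]])
  then obtain u :: "nat \<Rightarrow> 'a \<Rightarrow> ereal" where u1: "\<forall>n. continuous_map X euclidean (u n)"
    and u2: "\<forall>x\<in>topspace X. (\<exists>n. - h x = u n x) \<and> (\<forall>n. - h x \<le> u n x)"
    unfolding stable_lower_def by blast
  have c: "\<forall>n. continuous_map X euclidean (\<lambda>x. - u n x)"
    using u1 cont_uminus_ereal by blast
  have st: "\<forall>x\<in>topspace X. (\<exists>n. h x = - u n x) \<and> (\<forall>n. - u n x \<le> h x)"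
  proof
    fix x assume x: "x \<in> topspace X"
    obtain n where "- h x = u n x" using u2 x by blast
    then have "h x = - u n x" by (metis ereal_uminus_uminus)
    moreover have "- u m x \<le> h x" for m
    proof -
      have "- h x \<le> u m x" using u2 x by blast
      then show ?thesis by (simp add: ereal_uminus_le_reorder)
    qed
    ultimately show "(\<exists>n. h x = - u n x) \<and> (\<forall>n. - u n x \<le> h x)" by blast
  qed
  show ?thesis unfolding stable_upper_def
    by (rule exI[of _ "\<lambda>n x. - u n x"]) (use c st in simp)
qed

lemma Hausdorff_euclidean_t2: "Hausdorff_space (euclidean :: 'b::t2_space topology)"
  unfolding Hausdorff_space_def
proof (intro allI impI)
  fix x y :: 'b assume "x \<in> topspace euclidean \<and> y \<in> topspace euclidean \<and> x \<noteq> y"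
  then have "x \<noteq> y" by simp
  from hausdorff[OF this] obtain U V where "open U" "open V" "x \<in> U" "y \<in> V" "U \<inter> V = {}"
    by blast
  then show "\<exists>U V. openin euclidean U \<and> openin euclidean V \<and> x \<in> U \<and> y \<in> V \<and> disjnt U V"
    by (intro exI[of _ U] exI[of _ V]) (simp add: disjnt_def)
qed

lemma baire_sigma_cc:
  fixes f :: "'a \<Rightarrow> ereal"
  assumes fc: "\<And>n. continuous_map X euclidean (fs n)" and st: "stably_converges X fs f"
  shows "continuous_map (subtopology X {x \<in> topspace X. \<forall>k\<ge>n. fs k x = fs n x}) euclidean f"
proof (rule continuous_map_eq)
  show "continuous_map (subtopology X {x \<in> topspace X. \<forall>k\<ge>n. fs k x = fs n x}) euclidean (fs n)"
    by (rule continuous_map_from_subtopology[OF fc])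
  fix x assume x0: "x \<in> topspace (subtopology X {x \<in> topspace X. \<forall>k\<ge>n. fs k x = fs n x})"
  have x1: "x \<in> topspace X" using x0 by simp
  have x2: "\<forall>k\<ge>n. fs k x = fs n x" using x0 unfolding topspace_subtopology by blast
  have "\<exists>N. \<forall>k\<ge>N. fs k x = f x" using st x1 unfolding stably_converges_def by blast
  then obtain N where N: "\<forall>k\<ge>N. fs k x = f x" by (elim exE)
  have "fs (max n N) x = f x" using N[rule_format, OF max.cobounded2] .
  moreover have "fs (max n N) x = fs n x" using x2[rule_format, OF max.cobounded1] .
  ultimately show "fs n x = f x" by simp
qed

lemma baire_sigma_cl:
  fixes fs :: "nat \<Rightarrow> 'a \<Rightarrow> ereal"
  assumes fc: "\<And>n. continuous_map X euclidean (fs n)"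
  shows "closedin X {x \<in> topspace X. \<forall>k\<ge>n. fs k x = fs n x}"
proof -
  define K where "K = (\<lambda>k. {x \<in> topspace X. fs k x = fs n x}) ` {n..}"
  have eq: "{x \<in> topspace X. \<forall>k\<ge>n. fs k x = fs n x} = \<Inter> K"
    unfolding K_def by blast
  have "closedin X (\<Inter> K)"
  proof (rule closedin_Inter)
    show "K \<noteq> {}" by (auto simp: K_def)
    fix S assume "S \<in> K"
    then obtain k where "S = {x \<in> topspace X. fs k x = fs n x}" by (auto simp: K_def)
    then show "closedin X S" using closedin_continuous_maps_eq[OF Hausdorff_euclidean_t2 fc[of k] fc[of n]] by simp
  qed
  then show ?thesis using eq by simp
qed

lemma baire_sigma_cov:
  fixes fs :: "nat \<Rightarrow> 'a \<Rightarrow> ereal"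
  assumes st: "stably_converges X fs f"
  shows "(\<Union>n. {x \<in> topspace X. \<forall>k\<ge>n. fs k x = fs n x}) = topspace X"
proof (intro set_eqI iffI)
  fix x assume "x \<in> (\<Union>n. {x \<in> topspace X. \<forall>k\<ge>n. fs k x = fs n x})" then show "x \<in> topspace X" by blast
next
  fix x assume x: "x \<in> topspace X"
  have "\<exists>N. \<forall>k\<ge>N. fs k x = f x" using st x unfolding stably_converges_def by blast
  then obtain N where N: "\<forall>k\<ge>N. fs k x = f x" by (elim exE)
  have "\<forall>k\<ge>N. fs k x = fs N x" using N by simp
  then show "x \<in> (\<Union>n. {x \<in> topspace X. \<forall>k\<ge>n. fs k x = fs n x})" using x by blast
qed

lemma baire_sigma:
  fixes f :: "'a \<Rightarrow> ereal"
  assumes "first_stable_baire X f"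
  shows "sigma_continuous X f"
proof -
  obtain fs :: "nat \<Rightarrow> 'a \<Rightarrow> ereal" where fc0: "\<forall>n. continuous_map X euclidean (fs n)" and st: "stably_converges X fs f"
    using assms unfolding first_stable_baire_def by blast
  have fc: "continuous_map X euclidean (fs n)" for n using fc0 by blast
  show ?thesis unfolding sigma_continuous_def
    apply (rule exI[of _ "\<lambda>n. {x \<in> topspace X. \<forall>k\<ge>n. fs k x = fs n x}"])
    using baire_sigma_cl[where fs=fs, OF fc] baire_sigma_cov[OF st] baire_sigma_cc[where fs=fs, OF fc st] by blast
qed




lemma lower_usc:
  assumes "stable_lower X g" shows "usc_map X g"
proof -
  obtain u :: "nat \<Rightarrow> 'a \<Rightarrow> ereal" where u1: "\<forall>n. continuous_map X euclidean (u n)"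
    and u2: "\<forall>x\<in>topspace X. (\<exists>n. g x = u n x) \<and> (\<forall>n. g x \<le> u n x)"
    using assms unfolding stable_lower_def by blast
  show ?thesis unfolding usc_map_def
  proof
    fix t
    have "{x \<in> topspace X. g x < t} = (\<Union>n. {x \<in> topspace X. u n x < t})"
    proof (intro set_eqI iffI)
      fix x assume "x \<in> {x \<in> topspace X. g x < t}"
      then have x: "x \<in> topspace X" "g x < t" by auto
      then obtain n where "g x = u n x" using u2 by blast
      then show "x \<in> (\<Union>n. {x \<in> topspace X. u n x < t})" using x by auto
    next
      fix x assume "x \<in> (\<Union>n. {x \<in> topspace X. u n x < t})"
      then obtain n where x: "x \<in> topspace X" "u n x < t" by auto
      then have "g x \<le> u n x" using u2 by blast
      then show "x \<in> {x \<in> topspace X. g x < t}" using x by auto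
    qed
    moreover have "openin X {x \<in> topspace X. u n x < t}" for n
      using u1 by (simp add: continuous_map_upper_lower_semicontinuous_lt)
    ultimately show "openin X {x \<in> topspace X. g x < t}" by auto
  qed
qed

lemma lower_INF:
  fixes g :: "'a \<Rightarrow> ereal"
  assumes "\<forall>x\<in>topspace X. (\<exists>n. g x = u n x) \<and> (\<forall>n. g x \<le> u n x)" "x \<in> topspace X"
  shows "g x = (INF n. u n x)"
proof (rule antisym)
  obtain m where "g x = u m x" using assms by blast
  have "\<forall>n. g x \<le> u n x" using assms by blast
  then show "(INF n. u n x) \<ge> g x" by (simp add: INF_greatest)
  show "(INF n. u n x) \<le> g x" using \<open>g x = u m x\<close> by (metis INF_lower UNIV_I)
qed

lemma upper_SUP:
  fixes h :: "'a \<Rightarrow> ereal"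
  assumes "\<forall>x\<in>topspace X. (\<exists>n. h x = u n x) \<and> (\<forall>n. u n x \<le> h x)" "x \<in> topspace X"
  shows "h x = (SUP n. u n x)"
proof (rule antisym)
  obtain m where "h x = u m x" using assms by blast
  have "\<forall>n. u n x \<le> h x" using assms by blast
  then show "(SUP n. u n x) \<le> h x" by (simp add: SUP_least)
  show "(SUP n. u n x) \<ge> h x" using \<open>h x = u m x\<close> by (metis SUP_upper UNIV_I)
qed

lemma lower_baire:
  assumes "stable_lower X g" shows "first_stable_baire X g"
proof -
  obtain u :: "nat \<Rightarrow> 'a \<Rightarrow> ereal" where u1: "\<forall>n. continuous_map X euclidean (u n)"
    and u2: "\<forall>x\<in>topspace X. (\<exists>n. g x = u n x) \<and> (\<forall>n. g x \<le> u n x)"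
    using assms unfolding stable_lower_def by blast
  define F where "F = rec_nat (u 0) (\<lambda>n r x. min (r x) (u (Suc n) x))"
  have F0: "F 0 = u 0" by (simp add: F_def)
  have FS: "F (Suc n) = (\<lambda>x. min (F n x) (u (Suc n) x))" for n by (simp add: F_def)
  have Fc: "continuous_map X euclidean (F n)" for n
  proof (induction n)
    case 0 then show ?case using u1 F0 by simp
  next
    case (Suc n) then show ?case unfolding FS using cont_min_ereal u1 by blast
  qed
  have Fg: "g x \<le> F n x" if "x \<in> topspace X" for n x
  proof (induction n)
    case 0 then show ?case using u2 that F0 by simp
  next
    case (Suc n) then show ?case unfolding FS using u2 that by simp
  qed
  have Fu: "F n x \<le> u m x" if "m \<le> n" for m n x
    using that
  proof (induction n)
    case 0 then show ?case by (simp add: F0)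
  next
    case (Suc n)
    show ?case
    proof (cases "m = Suc n")
      case True then show ?thesis by (simp add: FS)
    next
      case False
      then have "m \<le> n" using Suc.prems by simp
      then have "F n x \<le> u m x" by (rule Suc.IH)
      then show ?thesis by (simp add: FS min.coboundedI1)
    qed
  qed
  have "stably_converges X F g"
    unfolding stably_converges_def
  proof
    fix x assume x: "x \<in> topspace X"
    then obtain m where m: "g x = u m x" using u2 by blast
    have "F k x = g x" if "k \<ge> m" for k
      using Fu[OF that, of x] Fg[OF x, of k] m by simp
    then show "\<exists>n. \<forall>k\<ge>n. F k x = g x" by blast
  qed
  then show ?thesis unfolding first_stable_baire_def using Fc by blast
qed

lemma upper_to_lower:
  assumes "stable_upper X h" shows "stable_lower X (\<lambda>x. - h x)"
proof -
  obtain u :: "nat \<Rightarrow> 'a \<Rightarrow> ereal" where u1: "\<forall>n. continuous_map X euclidean (u n)"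
    and u2: "\<forall>x\<in>topspace X. (\<exists>n. h x = u n x) \<and> (\<forall>n. u n x \<le> h x)"
    using assms unfolding stable_upper_def by blast
  have c: "\<forall>n. continuous_map X euclidean (\<lambda>x. - u n x)"
    using u1 cont_uminus_ereal by blast
  have st: "\<forall>x\<in>topspace X. (\<exists>n. - h x = - u n x) \<and> (\<forall>n. - h x \<le> - u n x)"
    using u2 by (metis ereal_minus_le_minus)
  show ?thesis unfolding stable_lower_def
    by (rule exI[of _ "\<lambda>n x. - u n x"]) (use c st in simp)
qed

lemma baire_uminus:
  assumes "first_stable_baire X (\<lambda>x. - f x)" shows "first_stable_baire X f"
proof -
  obtain fs :: "nat \<Rightarrow> 'a \<Rightarrow> ereal" where fc: "\<forall>n. continuous_map X euclidean (fs n)"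
    and st: "stably_converges X fs (\<lambda>x. - f x)"
    using assms unfolding first_stable_baire_def by blast
  have c: "\<forall>n. continuous_map X euclidean (\<lambda>x. - fs n x)"
    using fc cont_uminus_ereal by blast
  have s2: "stably_converges X (\<lambda>n x. - fs n x) f"
    using st unfolding stably_converges_def by (metis ereal_uminus_uminus)
  show ?thesis unfolding first_stable_baire_def
    by (rule exI[of _ "\<lambda>n x. - fs n x"]) (use c s2 in simp)
qed

lemma upper_lsc: "stable_upper X h \<Longrightarrow> lsc_map X h"
  using lower_usc[OF upper_to_lower] usc_uminus by blast

lemma upper_baire: "stable_upper X h \<Longrightarrow> first_stable_baire X h"
  using lower_baire[OF upper_to_lower] baire_uminus by blast

lemma combine:
  assumes lo: "stable_lower X g" and up: "stable_upper X h"
    and cc: "continuous_map X euclidean c" and cb: "\<And>x. x \<in> topspace X \<Longrightarrow> g x \<le> c x \<and> c x \<le> h x"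
  shows "stable_hahn_pair X g h"
proof -
  obtain u :: "nat \<Rightarrow> 'a \<Rightarrow> ereal" where u1: "\<forall>n. continuous_map X euclidean (u n)"
    and u2: "\<forall>x\<in>topspace X. (\<exists>n. g x = u n x) \<and> (\<forall>n. g x \<le> u n x)"
    using lo unfolding stable_lower_def by blast
  obtain v :: "nat \<Rightarrow> 'a \<Rightarrow> ereal" where v1: "\<forall>n. continuous_map X euclidean (v n)"
    and v2: "\<forall>x\<in>topspace X. (\<exists>n. h x = v n x) \<and> (\<forall>n. v n x \<le> h x)"
    using up unfolding stable_upper_def by blast
  define w where "w n = (if even n then (\<lambda>x. min (u (n div 2) x) (c x)) else (\<lambda>x. max (v (n div 2) x) (c x)))" for n
  have wc: "\<forall>n. continuous_map X euclidean (w n)"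
  proof
    fix n
    have "continuous_map X euclidean (\<lambda>x. min (u (n div 2) x) (c x))"
      using u1 cc by (intro cont_min_ereal) auto
    moreover have "continuous_map X euclidean (\<lambda>x. max (v (n div 2) x) (c x))"
      using v1 cc by (intro cont_max_ereal) auto
    ultimately show "continuous_map X euclidean (w n)" by (simp add: w_def)
  qed
  have "\<forall>x\<in>topspace X. (\<exists>n. g x = w n x) \<and> (\<forall>n. g x \<le> w n x) \<and> (\<exists>n. h x = w n x) \<and> (\<forall>n. w n x \<le> h x)"
  proof
    fix x assume x: "x \<in> topspace X"
    have gc: "g x \<le> c x" and ch: "c x \<le> h x" using cb[OF x] by auto
    obtain m where m: "g x = u m x" using u2 x by blast
    obtain m' where m': "h x = v m' x" using v2 x by blast
    have "g x = w (2*m) x" using m gc by (simp add: w_def min_def)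
    moreover have "h x = w (2*m'+1) x" using m' ch by (simp add: w_def max_def)
    moreover have "g x \<le> w n x" for n
      using u2 x gc ch v2 by (auto simp: w_def intro: order.trans[OF gc])
    moreover have "w n x \<le> h x" for n
      using u2 x gc ch v2 by (auto simp: w_def intro: order.trans[OF _ ch])
    ultimately show "(\<exists>n. g x = w n x) \<and> (\<forall>n. g x \<le> w n x) \<and> (\<exists>n. h x = w n x) \<and> (\<forall>n. w n x \<le> h x)"
      by blast
  qed
  then show ?thesis unfolding stable_hahn_pair_def using wc by blast
qed




lemma stable_imp:
  assumes "stable_hahn_pair X g h"
  shows "stable_lower X g" "stable_upper X h" "hahn_pair X g h" "countable_hahn_pair X g h"
    "first_stable_baire X g" "first_stable_baire X h" "sigma_continuous X g" "sigma_continuous X h"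
proof -
  obtain u :: "nat \<Rightarrow> 'a \<Rightarrow> ereal" where u1: "\<forall>n. continuous_map X euclidean (u n)"
    and u2: "\<forall>x\<in>topspace X. (\<exists>n. g x = u n x) \<and> (\<forall>n. g x \<le> u n x) \<and> (\<exists>n. h x = u n x) \<and> (\<forall>n. u n x \<le> h x)"
    using assms unfolding stable_hahn_pair_def by blast
  have l2: "\<forall>x\<in>topspace X. (\<exists>n. g x = u n x) \<and> (\<forall>n. g x \<le> u n x)" using u2 by blast
  have h2: "\<forall>x\<in>topspace X. (\<exists>n. h x = u n x) \<and> (\<forall>n. u n x \<le> h x)" using u2 by blast
  show sl: "stable_lower X g" unfolding stable_lower_def using u1 l2 by blast
  show su: "stable_upper X h" unfolding stable_upper_def using u1 h2 by blast
  have gh: "\<forall>x\<in>topspace X. g x \<le> h x"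
  proof
    fix x assume "x \<in> topspace X"
    then have "g x \<le> u 0 x" "u 0 x \<le> h x" using u2 by blast+
    then show "g x \<le> h x" by (rule order.trans)
  qed
  show "hahn_pair X g h" unfolding hahn_pair_def using gh lower_usc[OF sl] upper_lsc[OF su] by blast
  have "\<forall>x\<in>topspace X. g x = (INF n. u n x) \<and> h x = (SUP n. u n x) \<and> g x \<le> h x"
    using lower_INF[OF l2] upper_SUP[OF h2] gh by blast
  then show "countable_hahn_pair X g h" unfolding countable_hahn_pair_def using u1 by blast
  show bg: "first_stable_baire X g" by (rule lower_baire[OF sl])
  show bh: "first_stable_baire X h" by (rule upper_baire[OF su])
  show "sigma_continuous X g" by (rule baire_sigma[OF bg])
  show "sigma_continuous X h" by (rule baire_sigma[OF bh])
qed

lemma normal_sigma_imp: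
  assumes X: "normal_space X" and hp: "hahn_pair X g h" and sg: "sigma_continuous X g" and sh: "sigma_continuous X h"
  shows "stable_hahn_pair X g h"
proof -
  have gu: "usc_map X g" and hl: "lsc_map X h" and gh: "\<And>x. x \<in> topspace X \<Longrightarrow> g x \<le> h x"
    using hp unfolding hahn_pair_def by auto
  have "\<exists>c. continuous_map X euclidean c \<and> (\<forall>x\<in>topspace X. g x \<le> c x \<and> c x \<le> h x)"
    by (rule tong_ereal[OF X gu hl gh]) blast+
  then obtain c where c1: "continuous_map X euclidean c" and c2: "\<forall>x\<in>topspace X. g x \<le> c x \<and> c x \<le> h x"
    by blast
  show ?thesis
    using combine[OF stable_lower_from_cover[OF X gu sg] stable_upper_from_cover[OF X hl sh] c1] c2 by blast
qed

lemma normal_baire_imp: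
  assumes X: "normal_space X" and hp: "hahn_pair X g h" and bg: "first_stable_baire X g" and bh: "first_stable_baire X h"
  shows "stable_hahn_pair X g h"
  by (rule normal_sigma_imp[OF X hp baire_sigma[OF bg] baire_sigma[OF bh]])




lemma proj_cont:
  fixes S :: "(nat \<Rightarrow> real) set"
  shows "continuous_map (top_of_set S) euclideanreal (\<lambda>y. y k)"
proof -
  have "continuous_map (product_topology (\<lambda>_. euclideanreal) UNIV) euclideanreal (\<lambda>y. y k)"
    by (rule continuous_map_product_projection) simp
  then have "continuous_map euclidean euclideanreal (\<lambda>y::nat \<Rightarrow> real. y k)"
    by (simp add: euclidean_product_topology)
  then show ?thesis by (rule continuous_map_from_subtopology)
qed

lemma countable_imp:
  fixes g h :: "'a \<Rightarrow> ereal"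
  assumes ch: "countable_hahn_pair X g h" and bg: "first_stable_baire X g" and bh: "first_stable_baire X h"
  shows "stable_hahn_pair X g h"
proof -
  obtain gs hs :: "nat \<Rightarrow> 'a \<Rightarrow> ereal" where gs: "\<forall>n. continuous_map X euclidean (gs n)"
    and hs: "\<forall>n. continuous_map X euclidean (hs n)"
    and gh: "\<forall>x\<in>topspace X. g x = (INF n. gs n x) \<and> h x = (SUP n. hs n x) \<and> g x \<le> h x"
    using ch unfolding countable_hahn_pair_def by blast
  obtain p :: "nat \<Rightarrow> 'a \<Rightarrow> ereal" where pc: "\<forall>n. continuous_map X euclidean (p n)"
    and ps: "stably_converges X p g"
    using bg unfolding first_stable_baire_def by blast
  obtain q :: "nat \<Rightarrow> 'a \<Rightarrow> ereal" where qc: "\<forall>n. continuous_map X euclidean (q n)"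
    and qs: "stably_converges X q h"
    using bh unfolding first_stable_baire_def by blast
  define comp :: "nat \<Rightarrow> nat \<Rightarrow> 'a \<Rightarrow> ereal" where
    "comp r m = (if r = 0 then gs m else if r = 1 then hs m else if r = 2 then p m else q m)" for r m
  have compc: "continuous_map X euclidean (comp r m)" for r m
    using gs hs pc qc by (simp add: comp_def)
  define \<Phi> :: "'a \<Rightarrow> nat \<Rightarrow> real" where "\<Phi> x = (\<lambda>k. ea (comp (k mod 4) (k div 4) x))" for x
  define S where "S = \<Phi> ` topspace X"
  define Y where "Y = top_of_set S"
  have tY: "topspace Y = S" by (simp add: Y_def)
  have \<Phi>e: "continuous_map X euclidean \<Phi>"
  proof -
    have "continuous_map X (product_topology (\<lambda>_. euclideanreal) UNIV) \<Phi>"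
      unfolding continuous_map_componentwise_UNIV \<Phi>_def
      using cont_ea[OF compc] by simp
    then show ?thesis by (simp add: euclidean_product_topology)
  qed
  have \<Phi>c: "continuous_map X Y \<Phi>"
    unfolding Y_def using \<Phi>e by (simp add: continuous_map_in_subtopology S_def)
  have Yn: "normal_space Y"
    unfolding Y_def by (intro metrizable_imp_normal_space metrizable_space_subtopology metrizable_space_euclidean)
  have key: "eb (\<Phi> x (4 * m + r)) = comp r m x" if "r < 4" for x m r
    using that by (simp add: \<Phi>_def)
  have bnd: "-1 \<le> y k \<and> y k \<le> 1" if "y \<in> S" for y k
    using that ea_bounds by (auto simp: S_def \<Phi>_def)
  have pc': "continuous_map Y euclidean (\<lambda>y. eb (y k))" for k
    using cont_eb[OF proj_cont[of S k]] bnd unfolding Y_def by simp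
  define G where "G y = (INF m. eb (y (4 * m)))" for y :: "nat \<Rightarrow> real"
  define H where "H y = (SUP m. eb (y (4 * m + 1)))" for y :: "nat \<Rightarrow> real"
  have G\<Phi>: "G (\<Phi> x) = g x" if "x \<in> topspace X" for x
  proof -
    have "G (\<Phi> x) = (INF m. gs m x)"
      unfolding G_def using key[of 0 x] by (simp add: comp_def)
    then show ?thesis using gh that by simp
  qed
  have H\<Phi>: "H (\<Phi> x) = h x" if "x \<in> topspace X" for x
  proof -
    have "H (\<Phi> x) = (SUP m. hs m x)"
      unfolding H_def using key[of 1 x] by (simp add: comp_def)
    then show ?thesis using gh that by simp
  qed
  have "hahn_pair Y G H"
    unfolding hahn_pair_def
  proof (intro conjI ballI)
    fix y assume "y \<in> topspace Y"
    then obtain x where x: "x \<in> topspace X" "y = \<Phi> x" by (auto simp: tY S_def)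
    have "g x \<le> h x" using gh x(1) by blast
    then show "G y \<le> H y" using G\<Phi>[OF x(1)] H\<Phi>[OF x(1)] x(2) by simp
  next
    show "usc_map Y G"
      unfolding usc_map_def
    proof
      fix t
      have "{y \<in> topspace Y. G y < t} = (\<Union>m. {y \<in> topspace Y. eb (y (4 * m)) < t})"
        by (auto simp: G_def INF_less_iff)
      moreover have "openin Y {y \<in> topspace Y. eb (y (4 * m)) < t}" for m
        using pc'[of "4 * m"] by (simp add: continuous_map_upper_lower_semicontinuous_lt)
      ultimately show "openin Y {y \<in> topspace Y. G y < t}" by auto
    qed
  next
    show "lsc_map Y H"
      unfolding lsc_map_def
    proof
      fix t
      have "{y \<in> topspace Y. t < H y} = (\<Union>m. {y \<in> topspace Y. t < eb (y (4 * m + 1))})"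
        by (auto simp: H_def less_SUP_iff)
      moreover have "openin Y {y \<in> topspace Y. t < eb (y (4 * m + 1))}" for m
        using pc'[of "4 * m + 1"] by (simp add: continuous_map_upper_lower_semicontinuous_lt)
      ultimately show "openin Y {y \<in> topspace Y. t < H y}" by auto
    qed
  qed
  moreover have "first_stable_baire Y G"
    unfolding first_stable_baire_def
  proof (intro exI[of _ "\<lambda>n y. eb (y (4 * n + 2))"] conjI allI)
    show "continuous_map Y euclidean (\<lambda>y. eb (y (4 * n + 2)))" for n by (rule pc')
    show "stably_converges Y (\<lambda>n y. eb (y (4 * n + 2))) G"
      unfolding stably_converges_def
    proof
      fix y assume "y \<in> topspace Y"
      then obtain x where x: "x \<in> topspace X" "y = \<Phi> x" by (auto simp: tY S_def)
      obtain N where N: "\<forall>k\<ge>N. p k x = g x" using ps x(1) unfolding stably_converges_def by blast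
      have "eb (y (4 * k + 2)) = G y" if "k \<ge> N" for k
        using key[of 2 x k] N that x G\<Phi> by (simp add: comp_def)
      then show "\<exists>n. \<forall>k\<ge>n. eb (y (4 * k + 2)) = G y" by blast
    qed
  qed
  moreover have "first_stable_baire Y H"
    unfolding first_stable_baire_def
  proof (intro exI[of _ "\<lambda>n y. eb (y (4 * n + 3))"] conjI allI)
    show "continuous_map Y euclidean (\<lambda>y. eb (y (4 * n + 3)))" for n by (rule pc')
    show "stably_converges Y (\<lambda>n y. eb (y (4 * n + 3))) H"
      unfolding stably_converges_def
    proof
      fix y assume "y \<in> topspace Y"
      then obtain x where x: "x \<in> topspace X" "y = \<Phi> x" by (auto simp: tY S_def)
      obtain N where N: "\<forall>k\<ge>N. q k x = h x" using qs x(1) unfolding stably_converges_def by blast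
      have "eb (y (4 * k + 3)) = H y" if "k \<ge> N" for k
        using key[of 3 x k] N that x H\<Phi> by (simp add: comp_def)
      then show "\<exists>n. \<forall>k\<ge>n. eb (y (4 * k + 3)) = H y" by blast
    qed
  qed
  ultimately have "stable_hahn_pair Y G H" using normal_baire_imp[OF Yn] by blast
  then obtain u :: "nat \<Rightarrow> (nat \<Rightarrow> real) \<Rightarrow> ereal" where u1: "\<forall>n. continuous_map Y euclidean (u n)"
    and u2: "\<forall>y\<in>topspace Y. (\<exists>n. G y = u n y) \<and> (\<forall>n. G y \<le> u n y) \<and> (\<exists>n. H y = u n y) \<and> (\<forall>n. u n y \<le> H y)"
    unfolding stable_hahn_pair_def by blast
  have w1: "\<forall>n. continuous_map X euclidean (\<lambda>x. u n (\<Phi> x))"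
  proof
    fix n
    show "continuous_map X euclidean (\<lambda>x. u n (\<Phi> x))"
      using continuous_map_compose[OF \<Phi>c, of euclidean "u n"] u1 by (simp add: o_def)
  qed
  have w2: "\<forall>x\<in>topspace X. (\<exists>n. g x = u n (\<Phi> x)) \<and> (\<forall>n. g x \<le> u n (\<Phi> x)) \<and> (\<exists>n. h x = u n (\<Phi> x)) \<and> (\<forall>n. u n (\<Phi> x) \<le> h x)"
  proof
    fix x assume x: "x \<in> topspace X"
    then have "\<Phi> x \<in> topspace Y" by (simp add: tY S_def)
    then show "(\<exists>n. g x = u n (\<Phi> x)) \<and> (\<forall>n. g x \<le> u n (\<Phi> x)) \<and> (\<exists>n. h x = u n (\<Phi> x)) \<and> (\<forall>n. u n (\<Phi> x) \<le> h x)"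
      using u2 G\<Phi>[OF x] H\<Phi>[OF x] by metis
  qed
  show ?thesis unfolding stable_hahn_pair_def
    by (rule exI[of _ "\<lambda>n x. u n (\<Phi> x)"]) (use w1 w2 in simp)
qed


theorem proposition2p4:
  fixes X :: "'a topology" and g h :: "'a \<Rightarrow> ereal"
  shows "(stable_hahn_pair X g h \<longleftrightarrow>
            countable_hahn_pair X g h \<and> first_stable_baire X g \<and> first_stable_baire X h)
       \<and> (normal_space X \<longrightarrow>
            (stable_hahn_pair X g h \<longleftrightarrow>
               hahn_pair X g h \<and> first_stable_baire X g \<and> first_stable_baire X h)
          \<and> (stable_hahn_pair X g h \<longleftrightarrow>
               hahn_pair X g h \<and> sigma_continuous X g \<and> sigma_continuous X h))"
proof -
  have A: "stable_hahn_pair X g h \<longleftrightarrow>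
            countable_hahn_pair X g h \<and> first_stable_baire X g \<and> first_stable_baire X h"
    using stable_imp[of X g h] countable_imp[of X g h] by blast
  have B: "normal_space X \<Longrightarrow> (stable_hahn_pair X g h \<longleftrightarrow>
               hahn_pair X g h \<and> first_stable_baire X g \<and> first_stable_baire X h)"
    using stable_imp[of X g h] normal_baire_imp[of X g h] by blast
  have C: "normal_space X \<Longrightarrow> (stable_hahn_pair X g h \<longleftrightarrow>
               hahn_pair X g h \<and> sigma_continuous X g \<and> sigma_continuous X h)"
    using stable_imp[of X g h] normal_sigma_imp[of X g h] by blast
  show ?thesis using A B C by blast
qed

end
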